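(* Let $u$ be a unit vector of the form $\frac{1}{\sqrt2^{\,k}\sqrt5^{\,\ell}}\begin{bmatrix}\alpha\\\beta\end{bmatrix}$ with $k,\ell\in\mathbb N$, $0\le k\le 2$, $\alpha,\beta\in\mathbb Z[i]$, whose least denominator exponent is $(k,\ell)$. Then there exists a Clifford circuit $W$ such that $Wu$ has least denominator exponent $(0,\ell)$.
   Context: A Clifford circuit is a product of the gates $\omega I$ (with $\omega=e^{i\pi/4}$), $H=\frac{1}{\sqrt2}\begin{bmatrix}1&1\\1&-1\end{bmatrix}$, $S=\begin{bmatrix}1&0\\0&i\end{bmatrix}$ and their inverses. For a vector $v\in\mathbb C^2$ that can be written as $\frac{1}{\sqrt2^{\,k}\sqrt5^{\,\ell}}\begin{bmatrix}\alpha\\\beta\end{bmatrix}$ with $k,\ell\in\mathbb N$, $0\le k\le2$, $\alpha,\beta\in\mathbb Z[i]$, the least $\sqrt2$-denominator exponent (resp. least $\sqrt5$-denominator exponent) is the least $k$ (resp. least $\ell$) for which such a representation exists, and the least denominator exponent of $v$ is the pair (least $\sqrt2$-exponent, least $\sqrt5$-exponent). *)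

theory Defs
  imports "HOL-Analysis.Analysis"
begin

definition gaussian_int :: "complex \<Rightarrow> bool" where
  "gaussian_int z \<longleftrightarrow> Re z \<in> \<int> \<and> Im z \<in> \<int>"

definition vec2 :: "complex \<Rightarrow> complex \<Rightarrow> complex ^ 2" where
  "vec2 a b = vector [a, b]"

definition mat2 :: "complex \<Rightarrow> complex \<Rightarrow> complex \<Rightarrow> complex \<Rightarrow> complex ^ 2 ^ 2" where
  "mat2 a b c d = vector [vector [a, b], vector [c, d]]"

definition omega :: complex where
  "omega = cis (pi / 4)"

definition gate_H :: "complex ^ 2 ^ 2" where
  "gate_H = mat2 (1 / sqrt 2) (1 / sqrt 2) (1 / sqrt 2) (- 1 / sqrt 2)"

definition gate_S :: "complex ^ 2 ^ 2" where
  "gate_S = mat2 1 0 0 \<i>"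

definition gate_omega :: "complex ^ 2 ^ 2" where
  "gate_omega = mat2 omega 0 0 omega"

inductive clifford :: "complex ^ 2 ^ 2 \<Rightarrow> bool" where
  clif_id: "clifford (mat 1)"
| clif_omega: "clifford W \<Longrightarrow> clifford (gate_omega ** W)"
| clif_omega_inv: "clifford W \<Longrightarrow> clifford (matrix_inv gate_omega ** W)"
| clif_H: "clifford W \<Longrightarrow> clifford (gate_H ** W)"
| clif_H_inv: "clifford W \<Longrightarrow> clifford (matrix_inv gate_H ** W)"
| clif_S: "clifford W \<Longrightarrow> clifford (gate_S ** W)"
| clif_S_inv: "clifford W \<Longrightarrow> clifford (matrix_inv gate_S ** W)"

definition representable :: "nat \<Rightarrow> nat \<Rightarrow> complex ^ 2 \<Rightarrow> bool" where
  "representable k l v \<longleftrightarrow> k \<le> 2 \<and>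
     (\<exists>\<alpha> \<beta>. gaussian_int \<alpha> \<and> gaussian_int \<beta> \<and>
        v = vec2 (\<alpha> / complex_of_real (sqrt 2 ^ k * sqrt 5 ^ l))
                 (\<beta> / complex_of_real (sqrt 2 ^ k * sqrt 5 ^ l)))"

definition lde2 :: "complex ^ 2 \<Rightarrow> nat" where
  "lde2 v = (LEAST k. \<exists>l. representable k l v)"

definition lde5 :: "complex ^ 2 \<Rightarrow> nat" where
  "lde5 v = (LEAST l. \<exists>k. representable k l v)"

definition lde :: "complex ^ 2 \<Rightarrow> nat \<times> nat" where
  "lde v = (lde2 v, lde5 v)"

end

theory Submission
  imports Defs
begin


lemma vec2_nth[simp]: "vec2 a b $ 1 = a" "vec2 a b $ 2 = b"
  by (simp_all add: vec2_def)

lemma vec2_eq_iff: "vec2 a b = vec2 c d \<longleftrightarrow> a = c \<and> b = d"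
  by (auto simp: vec_eq_iff forall_2)

lemma mat2_mult_vec2: "mat2 a b c d *v vec2 x y = vec2 (a*x+b*y) (c*x+d*y)"
  by (simp add: vec_eq_iff forall_2 matrix_vector_mult_def sum_2 mat2_def)

lemma norm_vec2: "norm (vec2 a b) = sqrt ((cmod a)^2 + (cmod b)^2)"
  by (simp add: norm_vec_def L2_set_def sum_2)

definition cvec :: "nat \<Rightarrow> nat \<Rightarrow> int \<Rightarrow> int \<Rightarrow> int \<Rightarrow> int \<Rightarrow> complex^2" where
"cvec k l a b c d = vec2 (Complex (of_int a) (of_int b) / complex_of_real (sqrt 2 ^ k * sqrt 5 ^ l))
   (Complex (of_int c) (of_int d) / complex_of_real (sqrt 2 ^ k * sqrt 5 ^ l))"

lemma H_cvec:
  assumes "a + c = 2*g1" "b + d = 2*g2" "a - c = 2*h1" "b - d = 2*h2"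
  shows "gate_H *v cvec 1 l a b c d = cvec 0 l g1 g2 h1 h2"
proof -
  have e: "sqrt 2 * sqrt 2 = (2::real)" by simp
  have r: "real_of_int a + real_of_int c = 2 * g1" "real_of_int b + real_of_int d = 2 * g2"
     "real_of_int a - real_of_int c = 2 * h1" "real_of_int b - real_of_int d = 2 * h2"
    using assms[THEN arg_cong[where f=real_of_int]] by simp_all
  show ?thesis
  unfolding gate_H_def cvec_def mat2_mult_vec2 vec2_eq_iff
  by (simp add: complex_eq_iff field_simps e r)
qed

lemma S_cvec: "gate_S *v cvec k l a b c d = cvec k l a b (-d) c"
  unfolding gate_S_def cvec_def mat2_mult_vec2 vec2_eq_iff
  by (simp add: complex_eq_iff)

lemma omega_eq: "omega = complex_of_real (1 / sqrt 2) * (1 + \<i>)"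
  by (simp add: omega_def cis.ctr cos_45 sin_45 complex_eq_iff real_div_sqrt)

fun omegas :: "nat \<Rightarrow> complex^2^2" where
  "omegas 0 = mat 1" | "omegas (Suc n) = gate_omega ** omegas n"

lemma omegas_vec: "omegas n *v vec2 x y = vec2 (omega^n * x) (omega^n * y)"
  by (induction n) (simp_all add: matrix_vector_mul_assoc[symmetric] gate_omega_def mat2_mult_vec2 mult.assoc)

lemma omega7: "omega^7 = complex_of_real (1 / sqrt 2) * (1 - \<i>)"
proof -
  have "omega^2 = \<i>" unfolding omega_eq by (simp add: power2_eq_square complex_eq_iff field_simps)
  have "omega^7 = omega^(2*3+1)" by simp
  also have "\<dots> = (omega^2)^3 * omega" by (simp only: power_add power_mult power_one_right)
  finally have "omega^7 = - \<i> * omega" using \<open>omega^2 = \<i>\<close> by (simp add: power3_eq_cube)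
  also have "\<dots> = complex_of_real (1 / sqrt 2) * (1 - \<i>)" unfolding omega_eq by (simp add: complex_eq_iff)
  finally show ?thesis .
qed




lemma om_cvec:
  assumes "a + b = 2 * p" "b - a = 2 * q" "c + d = 2 * r" "d - c = 2 * s"
  shows "omegas 7 *v cvec (Suc k) l a b c d = cvec k l p q r s"
proof -
  have e: "sqrt 2 * sqrt 2 = (2::real)" by simp
  have r: "real_of_int a + real_of_int b = 2 * p" "real_of_int b - real_of_int a = 2 * q"
     "real_of_int c + real_of_int d = 2 * r" "real_of_int d - real_of_int c = 2 * s"
    using assms[THEN arg_cong[where f=real_of_int]] by simp_all
  show ?thesis
  unfolding omega7 omegas_vec cvec_def vec2_eq_iff
  by (simp add: complex_eq_iff field_simps e r)
qed

lemma clifford_mult: "clifford W \<Longrightarrow> clifford V \<Longrightarrow> clifford (W ** V)"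
  by (induction rule: clifford.induct) (auto simp flip: matrix_mul_assoc intro: clifford.intros)

lemma clifford_omegas: "clifford (omegas n)"
  by (induction n) (auto intro: clifford.intros)

lemma gauss_iff: "gaussian_int z \<longleftrightarrow> (\<exists>a b. z = Complex (of_int a) (of_int b))"
proof
  assume "gaussian_int z"
  then obtain a b where "Re z = of_int a" "Im z = of_int b" unfolding gaussian_int_def
    by (metis Ints_cases)
  then show "\<exists>a b. z = Complex (of_int a) (of_int b)" by (metis complex.exhaust_sel)
qed (auto simp: gaussian_int_def)

lemma rep_iff: "representable k l v \<longleftrightarrow> k \<le> 2 \<and> (\<exists>a b c d. v = cvec k l a b c d)"
  unfolding representable_def cvec_def gauss_iff by blast

lemma sqrt_pow_sq: "x \<ge> 0 \<Longrightarrow> (sqrt x ^ k)^2 = (x::real)^k"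
  by (metis power_mult mult.commute real_sqrt_pow2)

lemma norm_cvec:
  assumes "norm (cvec k l a b c d) = 1"
  shows "a^2 + b^2 + c^2 + d^2 = 2^k * 5^l"
proof -
  have p: "sqrt 2 ^ k * sqrt 5 ^ l > 0" by simp
  have "(cmod (Complex (of_int a) (of_int b) / complex_of_real (sqrt 2 ^ k * sqrt 5 ^ l)))^2
      + (cmod (Complex (of_int c) (of_int d) / complex_of_real (sqrt 2 ^ k * sqrt 5 ^ l)))^2 = 1"
    using assms unfolding cvec_def norm_vec2 by (metis real_sqrt_eq_1_iff)
  then have "(real_of_int a^2 + real_of_int b^2 + real_of_int c^2 + real_of_int d^2) / (sqrt 2 ^ k * sqrt 5 ^ l)^2 = 1"
    using p by (simp add: norm_divide cmod_def power_divide add_divide_distrib)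
  then have "real_of_int a^2 + real_of_int b^2 + real_of_int c^2 + real_of_int d^2 = 2^k * 5^l"
    using p by (simp add: power_mult_distrib sqrt_pow_sq)
  then show ?thesis by (metis (mono_tags) of_int_eq_iff of_int_add of_int_mult of_int_power of_int_numeral)
qed




lemma L5:
  fixes x y :: int
  assumes "l' < l" "real_of_int x / sqrt 5 ^ l = real_of_int y / (sqrt 2 ^ k' * sqrt 5 ^ l')"
  shows "5 dvd x"
proof -
  define m where "m = l - l'"
  have m: "m \<ge> 1" "l = l' + m" using assms(1) unfolding m_def by auto
  have p5: "sqrt 5 ^ l' > 0" "sqrt 5 ^ l > 0" "sqrt 2 ^ k' > 0" by simp_all
  have "real_of_int x * (sqrt 2 ^ k' * sqrt 5 ^ l') = real_of_int y * sqrt 5 ^ l"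
    using assms(2) p5 by (simp add: field_simps)
  then have "(real_of_int x * sqrt 2 ^ k') * sqrt 5 ^ l' = (real_of_int y * sqrt 5 ^ m) * sqrt 5 ^ l'"
    unfolding m(2) power_add by (simp add: algebra_simps)
  then have "real_of_int x * sqrt 2 ^ k' = real_of_int y * sqrt 5 ^ m" using p5 by simp
  then have "(real_of_int x * sqrt 2 ^ k')^2 = (real_of_int y * sqrt 5 ^ m)^2" by simp
  then have "real_of_int (x^2 * 2^k') = real_of_int (y^2 * 5^m)"
    by (simp add: power_mult_distrib sqrt_pow_sq)
  then have e: "x^2 * 2^k' = y^2 * 5^m" by (simp only: of_int_eq_iff)
  have "(5::int) dvd 5^m" using m(1) by (simp add: dvd_power)
  then have "(5::int) dvd x^2 * 2^k'" unfolding e by simp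
  moreover have pr: "prime (5::int)" by simp
  ultimately have "5 dvd x^2 \<or> (5::int) dvd 2^k'" by (simp add: prime_dvd_mult_iff)
  moreover have "\<not> (5::int) dvd 2^k'"
  proof
    assume "(5::int) dvd 2^k'"
    then have "(5::int) dvd 2" using pr prime_dvd_power by blast
    then show False by simp
  qed
  ultimately show ?thesis using pr prime_dvd_power by blast
qed

lemma comp_eq:
  assumes "cvec k l a b c d = cvec k' l' a' b' c' d'"
  shows "real_of_int a / (sqrt 2 ^ k * sqrt 5 ^ l) = real_of_int a' / (sqrt 2 ^ k' * sqrt 5 ^ l')"
    "real_of_int b / (sqrt 2 ^ k * sqrt 5 ^ l) = real_of_int b' / (sqrt 2 ^ k' * sqrt 5 ^ l')"
    "real_of_int c / (sqrt 2 ^ k * sqrt 5 ^ l) = real_of_int c' / (sqrt 2 ^ k' * sqrt 5 ^ l')"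
    "real_of_int d / (sqrt 2 ^ k * sqrt 5 ^ l) = real_of_int d' / (sqrt 2 ^ k' * sqrt 5 ^ l')"
  using assms unfolding cvec_def vec2_eq_iff complex_eq_iff
  by (simp_all add: Re_divide_of_real Im_divide_of_real)

lemma cvec_5:
  assumes "l \<ge> 2"
  shows "cvec k l (5*a) (5*b) (5*c) (5*d) = cvec k (l-2) a b c d"
proof -
  have "l = l-2+2" using assms by simp
  then have "sqrt 5 ^ l = sqrt 5 ^ (l-2+2)" by (rule arg_cong)
  also have "\<dots> = sqrt 5 ^ (l-2) * sqrt 5 ^ 2" by (simp only: power_add)
  finally have "sqrt 5 ^ l = sqrt 5 ^ (l-2) * sqrt 5 ^ 2" .
  then have e: "sqrt 5 ^ l = 5 * sqrt 5 ^ (l-2)" by simp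
  show ?thesis unfolding cvec_def vec2_eq_iff e
    by (simp add: complex_eq_iff Re_divide_of_real Im_divide_of_real)
qed

lemma lowerB:
  assumes l5: "lde5 u = l" and k: "k \<le> 2" and u: "u = cvec k l a b c d"
    and v: "v = cvec 0 l g1 g2 h1 h2" and n: "g1^2+g2^2+h1^2+h2^2 = 5^l"
    and t: "5 dvd g1 \<Longrightarrow> 5 dvd g2 \<Longrightarrow> 5 dvd h1 \<Longrightarrow> 5 dvd h2 \<Longrightarrow>
            5 dvd a \<and> 5 dvd b \<and> 5 dvd c \<and> 5 dvd d"
  shows "lde v = (0, l)"
proof -
  have rv: "representable 0 l v" unfolding rep_iff v by auto
  have "lde2 v = 0" unfolding lde2_def by (rule Least_eq_0) (use rv in blast)
  moreover have "lde5 v = l" unfolding lde5_def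
  proof (rule Least_equality)
    show "\<exists>k. representable k l v" using rv by blast
  next
    fix y assume "\<exists>k. representable k y v"
    then obtain k' a' b' c' d' where v': "v = cvec k' y a' b' c' d'" unfolding rep_iff by blast
    show "l \<le> y"
    proof (rule ccontr)
      assume "\<not> l \<le> y"
      then have yl: "y < l" by simp
      have ce: "cvec 0 l g1 g2 h1 h2 = cvec k' y a' b' c' d'" using v v' by simp
      have d5: "5 dvd g1" "5 dvd g2" "5 dvd h1" "5 dvd h2"
        using comp_eq[OF ce] L5[OF yl] by simp_all
      then obtain x1 x2 x3 x4 where x: "g1 = 5*x1" "g2 = 5*x2" "h1 = 5*x3" "h2 = 5*x4"
        by (metis dvdE)
      have "25 * (x1^2+x2^2+x3^2+x4^2) = 5^l" using n unfolding x by (simp add: power_mult_distrib)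
      moreover have "x1^2+x2^2+x3^2+x4^2 \<ge> 0" by simp
      ultimately have "(25::int) \<le> 5^l"
        by (smt (verit) zero_less_power mult_le_cancel_left1)
      then have l2: "l \<ge> 2"
      proof -
        { assume "l < 2" then have "l = 0 \<or> l = 1" by auto
          then have "(5::int)^l \<le> 5" by auto }
        then show ?thesis using \<open>(25::int) \<le> 5^l\<close> by force
      qed
      from t[OF d5] obtain z1 z2 z3 z4 where z: "a = 5*z1" "b = 5*z2" "c = 5*z3" "d = 5*z4"
        by (metis dvdE)
      have "representable k (l-2) u" unfolding rep_iff u z cvec_5[OF l2] using k by blast
      then have "lde5 u \<le> l - 2" unfolding lde5_def by (intro Least_le) blast
      then show False using l5 l2 by simp
    qed
  qed
  ultimately show ?thesis unfolding lde_def by simp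
qed




definition good :: "nat \<Rightarrow> nat \<Rightarrow> int \<Rightarrow> int \<Rightarrow> int \<Rightarrow> int \<Rightarrow> bool" where
"good k l a b c d \<longleftrightarrow> (\<exists>W g1 g2 h1 h2. clifford W \<and> W *v cvec k l a b c d = cvec 0 l g1 g2 h1 h2 \<and>
   g1^2+g2^2+h1^2+h2^2 = 5^l \<and>
   (5 dvd g1 \<longrightarrow> 5 dvd g2 \<longrightarrow> 5 dvd h1 \<longrightarrow> 5 dvd h2 \<longrightarrow> 5 dvd a \<and> 5 dvd b \<and> 5 dvd c \<and> 5 dvd d))"

lemma cl_gates: "clifford gate_H" "clifford gate_S"
  using clif_H[OF clif_id] clif_S[OF clif_id] by simp_all

lemma good0: "a^2+b^2+c^2+d^2 = 5^l \<Longrightarrow> good 0 l a b c d"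
  unfolding good_def by (rule exI[of _ "mat 1"]) (auto intro: clifford.intros)

lemma goodH:
  assumes "even (a+c)" "even (b+d)" "a^2+b^2+c^2+d^2 = 2*5^l"
  shows "good 1 l a b c d"
proof -
  obtain g1 where g1: "a + c = 2 * g1" using assms(1) by (metis evenE)
  obtain g2 where g2: "b + d = 2 * g2" using assms(2) by (metis evenE)
  define h1 where "h1 = g1 - c"
  define h2 where "h2 = g2 - d"
  have h: "a - c = 2 * h1" "b - d = 2 * h2" using g1 g2 unfolding h1_def h2_def by auto
  have abcd: "a = g1 + h1" "c = g1 - h1" "b = g2 + h2" "d = g2 - h2" using g1 g2 h by auto
  have "2*(g1^2+g2^2+h1^2+h2^2) = a^2+b^2+c^2+d^2" unfolding abcd by (simp add: power2_eq_square algebra_simps)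
  then have n: "g1^2+g2^2+h1^2+h2^2 = 5^l" using assms(3) by simp
  have t: "5 dvd g1 \<longrightarrow> 5 dvd g2 \<longrightarrow> 5 dvd h1 \<longrightarrow> 5 dvd h2 \<longrightarrow> 5 dvd a \<and> 5 dvd b \<and> 5 dvd c \<and> 5 dvd d"
    unfolding abcd by simp
  show ?thesis unfolding good_def
    apply (rule exI[of _ "gate_H"])
    using H_cvec[OF g1 g2 h, of l] n t cl_gates by auto
qed

lemma goodOm:
  assumes "even (a+b)" "even (c+d)" "a^2+b^2+c^2+d^2 = 2^(Suc k)*5^l"
  shows "\<exists>p q r s. omegas 7 *v cvec (Suc k) l a b c d = cvec k l p q r s \<and> p^2+q^2+r^2+s^2 = 2^k*5^l
     \<and> (5 dvd p \<longrightarrow> 5 dvd q \<longrightarrow> 5 dvd r \<longrightarrow> 5 dvd s \<longrightarrow> 5 dvd a \<and> 5 dvd b \<and> 5 dvd c \<and> 5 dvd d)"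
proof -
  obtain p where p: "a + b = 2 * p" using assms(1) by (metis evenE)
  obtain r where r: "c + d = 2 * r" using assms(2) by (metis evenE)
  define q where "q = p - a"
  define s where "s = r - c"
  have h: "b - a = 2 * q" "d - c = 2 * s" using p r unfolding q_def s_def by auto
  have abcd: "a = p - q" "b = p + q" "c = r - s" "d = r + s" using p r h by auto
  have "2*(p^2+q^2+r^2+s^2) = a^2+b^2+c^2+d^2" unfolding abcd by (simp add: power2_eq_square algebra_simps)
  then have n: "p^2+q^2+r^2+s^2 = 2^k*5^l" using assms(3) by simp
  have t: "5 dvd p \<longrightarrow> 5 dvd q \<longrightarrow> 5 dvd r \<longrightarrow> 5 dvd s \<longrightarrow> 5 dvd a \<and> 5 dvd b \<and> 5 dvd c \<and> 5 dvd d"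
    unfolding abcd by simp
  show ?thesis using om_cvec[OF p h(1) r h(2)] n t by blast
qed

lemma goodS:
  assumes "good k l a b (-d) c"
  shows "good k l a b c d"
proof -
  from assms obtain W g1 g2 h1 h2 where W: "clifford W" "W *v cvec k l a b (-d) c = cvec 0 l g1 g2 h1 h2"
    "g1^2+g2^2+h1^2+h2^2 = 5^l"
    "5 dvd g1 \<longrightarrow> 5 dvd g2 \<longrightarrow> 5 dvd h1 \<longrightarrow> 5 dvd h2 \<longrightarrow> 5 dvd a \<and> 5 dvd b \<and> 5 dvd (-d) \<and> 5 dvd c"
    unfolding good_def by blast
  have "clifford (W ** gate_S)" using W(1) by (intro clifford_mult cl_gates)
  moreover have "(W ** gate_S) *v cvec k l a b c d = cvec 0 l g1 g2 h1 h2"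
    using W(2) by (simp add: matrix_vector_mul_assoc[symmetric] S_cvec)
  moreover have "5 dvd g1 \<longrightarrow> 5 dvd g2 \<longrightarrow> 5 dvd h1 \<longrightarrow> 5 dvd h2 \<longrightarrow> 5 dvd a \<and> 5 dvd b \<and> 5 dvd c \<and> 5 dvd d"
    using W(4) by simp
  ultimately show ?thesis unfolding good_def using W(3) by blast
qed

lemma good1:
  assumes "a^2+b^2+c^2+d^2 = 2*5^l"
  shows "good 1 l a b c d"
proof -
  have "even (a^2+b^2+c^2+d^2)" unfolding assms by simp
  then have "(even (a+b) \<and> even (c+d)) \<or> (even (a+c) \<and> even (b+d)) \<or> (even (a+d) \<and> even (b+c))"
    by auto
  then consider "even (a+b)" "even (c+d)" | "even (a+c)" "even (b+d)" | "even (a-d)" "even (b+c)"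
    by fastforce
  then show ?thesis
  proof cases
    case 1
    then obtain p q r s where o: "omegas 7 *v cvec 1 l a b c d = cvec 0 l p q r s" "p^2+q^2+r^2+s^2 = 5^l"
     "(5 dvd p \<longrightarrow> 5 dvd q \<longrightarrow> 5 dvd r \<longrightarrow> 5 dvd s \<longrightarrow> 5 dvd a \<and> 5 dvd b \<and> 5 dvd c \<and> 5 dvd d)"
      using goodOm[of a b c d 0 l] assms by auto
    then show ?thesis unfolding good_def using clifford_omegas by blast
  next
    case 2
    then show ?thesis using goodH assms by blast
  next
    case 3
    then have "good 1 l a b (-d) c" using goodH[of a "-d" b c l] assms by simp
    then show ?thesis by (rule goodS)
  qed
qed




lemma sq_mod4: "\<exists>t. (x::int)^2 = 4*t + (if even x then 0 else 1)"
proof (cases "even x")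
  case True then obtain y where "x = 2*y" by (metis evenE)
  then show ?thesis using True by (intro exI[of _ "y^2"]) (simp add: power2_eq_square)
next
  case False then obtain y where "x = 2*y+1" by (metis oddE)
  then show ?thesis using False by (intro exI[of _ "y^2+y"]) (simp add: power2_eq_square algebra_simps)
qed

lemma par4:
  assumes "(a::int)^2+b^2+c^2+d^2 = 4*N"
  shows "(even a \<and> even b \<and> even c \<and> even d) \<or> (odd a \<and> odd b \<and> odd c \<and> odd d)"
proof -
  obtain ta tb tc td where t: "a^2 = 4*ta + (if even a then 0 else 1)" "b^2 = 4*tb + (if even b then 0 else 1)"
    "c^2 = 4*tc + (if even c then 0 else 1)" "d^2 = 4*td + (if even d then 0 else 1)"
    using sq_mod4 by metis
  show ?thesis using assms unfolding t by presburger
qed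

lemma cvec_2:
  "cvec 2 l (2*a) (2*b) (2*c) (2*d) = cvec 0 l a b c d"
  unfolding cvec_def vec2_eq_iff
  by (simp add: complex_eq_iff Re_divide_of_real Im_divide_of_real)

lemma good2:
  assumes "a^2+b^2+c^2+d^2 = 4*5^l"
  shows "good 2 l a b c d"
proof -
  consider "even a" "even b" "even c" "even d" | "odd a" "odd b" "odd c" "odd d"
    using par4[OF assms] by blast
  then show ?thesis
  proof cases
    case 1
    then obtain x1 x2 x3 x4 where x: "a = 2*x1" "b = 2*x2" "c = 2*x3" "d = 2*x4" by (metis evenE)
    have "4*(x1^2+x2^2+x3^2+x4^2) = 4*5^l" using assms unfolding x by (simp add: power_mult_distrib)
    then have "x1^2+x2^2+x3^2+x4^2 = 5^l" by simp
    moreover have "cvec 2 l a b c d = cvec 0 l x1 x2 x3 x4" unfolding x cvec_2 ..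
    ultimately show ?thesis unfolding good_def x
      by (intro exI[of _ "mat 1"] exI[of _ x1] exI[of _ x2] exI[of _ x3] exI[of _ x4]) (auto intro: clifford.intros)
  next
    case 2
    then have "even (a+b)" "even (c+d)" by auto
    from goodOm[OF this, of 1 l] assms obtain p q r s where
      o: "omegas 7 *v cvec 2 l a b c d = cvec 1 l p q r s" "p^2+q^2+r^2+s^2 = 2*5^l"
        "5 dvd p \<longrightarrow> 5 dvd q \<longrightarrow> 5 dvd r \<longrightarrow> 5 dvd s \<longrightarrow> 5 dvd a \<and> 5 dvd b \<and> 5 dvd c \<and> 5 dvd d"
      by (auto simp: numeral_2_eq_2)
    from good1[OF o(2)] obtain W g1 g2 h1 h2 where W: "clifford W" "W *v cvec 1 l p q r s = cvec 0 l g1 g2 h1 h2"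
      "g1^2+g2^2+h1^2+h2^2 = 5^l"
      "5 dvd g1 \<longrightarrow> 5 dvd g2 \<longrightarrow> 5 dvd h1 \<longrightarrow> 5 dvd h2 \<longrightarrow> 5 dvd p \<and> 5 dvd q \<and> 5 dvd r \<and> 5 dvd s"
      unfolding good_def by blast
    have "clifford (W ** omegas 7)" using W(1) clifford_omegas by (rule clifford_mult)
    moreover have "(W ** omegas 7) *v cvec 2 l a b c d = cvec 0 l g1 g2 h1 h2"
      using W(2) o(1) by (simp add: matrix_vector_mul_assoc[symmetric])
    moreover have "5 dvd g1 \<longrightarrow> 5 dvd g2 \<longrightarrow> 5 dvd h1 \<longrightarrow> 5 dvd h2 \<longrightarrow> 5 dvd a \<and> 5 dvd b \<and> 5 dvd c \<and> 5 dvd d"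
      using W(4) o(3) by blast
    ultimately show ?thesis unfolding good_def using W(3) by blast
  qed
qed

theorem lemma6p8:
  fixes u :: "complex ^ 2" and k l :: nat
  assumes "norm u = 1"
    and "representable k l u"
    and "lde u = (k, l)"
  shows "\<exists>W. clifford W \<and> lde (W *v u) = (0, l)"
proof -
  from assms(2) obtain a b c d where k: "k \<le> 2" and u: "u = cvec k l a b c d" unfolding rep_iff by blast
  have n: "a^2+b^2+c^2+d^2 = 2^k*5^l" using norm_cvec assms(1) u by blast
  have l5: "lde5 u = l" using assms(3) unfolding lde_def by simp
  have "good k l a b c d"
  proof -
    have "k = 0 \<or> k = 1 \<or> k = 2" using k by auto
    then show ?thesis using n good0 good1 good2 by auto
  qed
  then obtain W g1 g2 h1 h2 where W: "clifford W" "W *v cvec k l a b c d = cvec 0 l g1 g2 h1 h2"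
      "g1^2+g2^2+h1^2+h2^2 = 5^l"
      "5 dvd g1 \<longrightarrow> 5 dvd g2 \<longrightarrow> 5 dvd h1 \<longrightarrow> 5 dvd h2 \<longrightarrow> 5 dvd a \<and> 5 dvd b \<and> 5 dvd c \<and> 5 dvd d"
      unfolding good_def by blast
  have v: "W *v u = cvec 0 l g1 g2 h1 h2" using W(2) u by simp
  have "lde (W *v u) = (0, l)"
    by (rule lowerB[OF l5 k u v W(3)]) (use W(4) in blast)
  then show ?thesis using W(1) by blast
qed


end
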